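(* Let $g,h$ be distinct formal letters (with $g\not\equiv h$, i.e. $h\ne g,g^{-1}$). For all $n\ge1$, the iterated commutator word $[g,h]_n$ contains none of the square words in $g$ and $h$ as a cyclic subword.
   Context: Iterated commutator words in the free group on $g,h$: $[g,h]_1:=gh^{-1}g^{-1}h$, and for $n\ge 2$, $[g,h]_n$ is the reduced form of $g\,[g,h]_{n-1}^{-1}\,g^{-1}\,[g,h]_{n-1}$. A cyclic permutation of a word $a_1\cdots a_n$ is a word $a_k\cdots a_na_1\cdots a_{k-1}$ for some $k\in[n]$. A word $u$ is a cyclic subword of $w$ if $u$ or $u^{-1}$ is a contiguous subword of some cyclic permutation of $w$. The square words in $g$ and $h$ are the words obtained from $ghgh$ and $gh^{-1}gh^{-1}$ by cyclic permutations and inversions, namely $ghgh$, $hghg$, $h^{-1}g^{-1}h^{-1}g^{-1}$, $g^{-1}h^{-1}g^{-1}h^{-1}$, $gh^{-1}gh^{-1}$, $h^{-1}gh^{-1}g$, $hg^{-1}hg^{-1}$, $g^{-1}hg^{-1}h$. *)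

theory Defs
  imports Main "HOL-Library.Sublist"
begin

text \<open>Words in the free group on letters of type 'a: a letter is a pair (x, e)
  with e = False meaning x and e = True meaning x^-1.\<close>

type_synonym 'a letter = "'a \<times> bool"

definition inv_letter :: "'a letter \<Rightarrow> 'a letter" where
  "inv_letter l = (fst l, \<not> snd l)"

definition inv_word :: "'a letter list \<Rightarrow> 'a letter list" where
  "inv_word w = rev (map inv_letter w)"

definition reduce_word :: "'a letter list \<Rightarrow> 'a letter list" where
  "reduce_word w = foldr (\<lambda>x acc. case acc of [] \<Rightarrow> [x]
        | y # ys \<Rightarrow> (if y = inv_letter x then ys else x # acc)) w []"

definition gen :: "'a \<Rightarrow> 'a letter" where "gen x = (x, False)"
definition ginv :: "'a \<Rightarrow> 'a letter" where "ginv x = (x, True)"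

fun iter_comm :: "'a \<Rightarrow> 'a \<Rightarrow> nat \<Rightarrow> 'a letter list" where
  "iter_comm g h 0 = []"
| "iter_comm g h (Suc 0) = [gen g, ginv h, ginv g, gen h]"
| "iter_comm g h (Suc (Suc n)) =
     reduce_word ([gen g] @ inv_word (iter_comm g h (Suc n)) @ [ginv g] @ iter_comm g h (Suc n))"

definition cyclic_perms :: "'b list \<Rightarrow> 'b list set" where
  "cyclic_perms w = {rotate k w | k. k < length w}"

definition cyclic_subword :: "'a letter list \<Rightarrow> 'a letter list \<Rightarrow> bool" where
  "cyclic_subword u w \<longleftrightarrow>
     (\<exists>v \<in> cyclic_perms w. sublist u v \<or> sublist (inv_word u) v)"

definition square_words :: "'a \<Rightarrow> 'a \<Rightarrow> 'a letter list set" where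
  "square_words g h =
    {[gen g, gen h, gen g, gen h], [gen h, gen g, gen h, gen g],
     [ginv h, ginv g, ginv h, ginv g], [ginv g, ginv h, ginv g, ginv h],
     [gen g, ginv h, gen g, ginv h], [ginv h, gen g, ginv h, gen g],
     [gen h, ginv g, gen h, ginv g], [ginv g, gen h, ginv g, gen h]}"

end

theory Submission
  imports Defs
begin

definition okw :: "'a \<Rightarrow> 'a \<Rightarrow> 'a letter list \<Rightarrow> bool" where
  "okw g h x \<longleftrightarrow> (\<forall>u \<in> square_words g h. \<not> sublist u x)"

definition reduced :: "'a letter list \<Rightarrow> bool" where
  "reduced w = successively (\<lambda>x y. y \<noteq> inv_letter x) w"

lemma inv_letter_inv[simp]: "inv_letter (inv_letter x) = x"
  by (simp add: inv_letter_def)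

lemma inv_word_inv[simp]: "inv_word (inv_word x) = x"
  by (simp add: inv_word_def rev_map comp_def)

lemma inv_word_append[simp]: "inv_word (xs @ ys) = inv_word ys @ inv_word xs"
  by (simp add: inv_word_def)

lemma inv_word_Cons[simp]: "inv_word (x # ys) = inv_word ys @ [inv_letter x]"
  by (simp add: inv_word_def)

lemma inv_word_Nil[simp]: "inv_word [] = []"
  by (simp add: inv_word_def)

lemma sublist_inv: "sublist u x \<Longrightarrow> sublist (inv_word u) (inv_word x)"
  unfolding inv_word_def by (simp add: map_mono_sublist)

lemma sq_inv: "u \<in> square_words g h \<Longrightarrow> inv_word u \<in> square_words g h"
  by (auto simp: square_words_def gen_def ginv_def inv_letter_def)

lemma len_sq: "u \<in> square_words g h \<Longrightarrow> length u = 4"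
  by (auto simp: square_words_def)

lemma okw_inv: "okw g h x \<Longrightarrow> okw g h (inv_word x)"
  unfolding okw_def by (metis inv_word_inv sq_inv sublist_inv)

lemma sub_split:
  assumes "length u = 4" "length c = 3" "sublist u (xs @ c @ ys)"
  shows "sublist u (xs @ c) \<or> sublist u (c @ ys)"
proof -
  from assms(3)[unfolded sublist_append[of u xs "c @ ys"]]
  consider "sublist u xs" | "sublist u (c @ ys)"
    | u1 u2 where "u = u1 @ u2" "suffix u1 xs" "prefix u2 (c @ ys)" by blast
  then show ?thesis
  proof cases
    case 1 then show ?thesis by (meson sublist_append)
  next
    case 2 then show ?thesis by simp
  next
    case 3
    show ?thesis
    proof (cases "u1 = []")
      case True then show ?thesis using 3 by (simp add: prefix_imp_sublist)
    next
      case False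
      then have "length u1 > 0" by simp
      moreover have "length u1 + length u2 = 4" using 3(1) assms(1) by simp
      ultimately have "length u2 \<le> length c" using assms(2) by linarith
      then have "prefix u2 c" using 3(3)
        by (metis prefix_append prefix_length_le take_all prefix_order.order_trans append_eq_conv_conj prefix_def)
      then show ?thesis using 3 sublist_append by blast
    qed
  qed
qed

lemma okw_split:
  assumes "length c = 3" "okw g h (xs @ c)" "okw g h (c @ ys)"
  shows "okw g h (xs @ c @ ys)"
  using assms sub_split len_sq unfolding okw_def by metis

lemma rot_sub:
  assumes "length u = 4" "length w \<ge> 3" "sublist u (rotate k w)"
  shows "sublist u (w @ take 3 w)"
proof -
  define j where "j = k mod length w"
  have r: "rotate k w = drop j w @ take j w" unfolding j_def by (simp add: rotate_drop_take)
  from assms(3)[unfolded r sublist_append]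
  consider "sublist u (drop j w)" | "sublist u (take j w)"
    | u1 u2 where "u = u1 @ u2" "suffix u1 (drop j w)" "prefix u2 (take j w)" by blast
  then show ?thesis
  proof cases
    case 1 then show ?thesis
      by (metis append_take_drop_id sublist_append sublist_append_leftI sublist_order.order_trans)
  next
    case 2 then show ?thesis
      by (metis append_take_drop_id sublist_append sublist_append_rightI sublist_order.order_trans)
  next
    case 3
    show ?thesis
    proof (cases "u1 = []")
      case True then show ?thesis using 3
        by (metis append_Nil append_take_drop_id prefix_imp_sublist sublist_append sublist_order.order_trans)
    next
      case False
      then have "length u1 > 0" by simp
      moreover have "length u1 + length u2 = 4" using 3(1) assms(1) by simp
      ultimately have "length u2 \<le> 3" by linarith
      moreover have "prefix u2 w" using 3(3)
        by (metis append_take_drop_id prefix_append)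
      ultimately have "prefix u2 (take 3 w)"
        by (auto simp: prefix_def)
      moreover have "suffix u1 w" using 3(2)
        by (metis append_take_drop_id suffix_appendI suffix_order.refl)
      ultimately show ?thesis using 3(1) sublist_append by blast
    qed
  qed
qed


lemma red_app: "reduce_word (xs @ ys) = foldr (\<lambda>x acc. case acc of [] \<Rightarrow> [x]
        | y # ys \<Rightarrow> (if y = inv_letter x then ys else x # acc)) xs (reduce_word ys)"
  by (simp add: reduce_word_def)

lemma red_Cons: "reduce_word (x # ys) = (case reduce_word ys of [] \<Rightarrow> [x]
        | y # zs \<Rightarrow> (if y = inv_letter x then zs else x # y # zs))"
  by (simp add: reduce_word_def split: list.split)

lemma red_fix: "reduced w \<Longrightarrow> reduce_word w = w"
proof (induction w)
  case Nil then show ?case by (simp add: reduce_word_def)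
next
  case (Cons x w)
  then have "reduced w" by (auto simp add: reduced_def successively_Cons)
  with Cons have e: "reduce_word w = w" by simp
  show ?case
  proof (cases w)
    case Nil then show ?thesis by (simp add: red_Cons reduce_word_def)
  next
    case (Cons y ys)
    with Cons.prems have "y \<noteq> inv_letter x" by (simp add: reduced_def)
    then show ?thesis by (subst red_Cons, subst e) (simp add: Cons)
  qed
qed

lemma reduced_tl: "reduced (x # t) \<Longrightarrow> reduced t"
  by (auto simp add: reduced_def successively_Cons)

lemma red_step:
  assumes "reduced (a # xs @ t)" "reduced (c # t)"
  shows "reduce_word (a # xs @ [inv_letter c] @ c # t) = a # xs @ t"
proof -
  have rt: "reduced t" using assms(2) by (rule reduced_tl)
  have "reduce_word ([inv_letter c] @ c # t) = t"
    using red_fix[OF assms(2)] by (simp only: append.simps red_Cons[of "inv_letter c" "c # t"]) simp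
  then have "reduce_word (a # xs @ [inv_letter c] @ c # t) = foldr (\<lambda>x acc. case acc of [] \<Rightarrow> [x]
        | y # ys \<Rightarrow> (if y = inv_letter x then ys else x # acc)) (a # xs) (reduce_word t)"
    using red_app[of "a # xs" "[inv_letter c] @ c # t"] red_fix[OF rt] by simp
  also have "\<dots> = reduce_word (a # xs @ t)" using red_app[of "a # xs" t] by simp
  also have "\<dots> = a # xs @ t" using red_fix[OF assms(1)] .
  finally show ?thesis .
qed

lemma reduced_inv: "reduced w \<Longrightarrow> reduced (inv_word w)"
  unfolding reduced_def inv_word_def successively_rev successively_map
  by (erule successively_mono) (auto simp: inv_letter_def)

lemma concrete_ok:
  assumes "g \<noteq> h"
  shows "okw g h [gen g, ginv h, gen g, gen h]"
    "okw g h [ginv g, ginv h, ginv g, gen h, gen g, ginv h, gen g]"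
    "okw g h [ginv h, gen g, gen h, gen g]"
    "okw g h [ginv h, ginv g, gen h, ginv g, ginv h, gen g, gen h]"
    "okw g h [gen g, ginv h, ginv g, gen h, gen g, ginv h, ginv g]"
  using assms by (simp_all add: okw_def square_words_def gen_def ginv_def sublist_Cons_right)


lemma main_inv:
  assumes gh: "g \<noteq> h"
  shows "\<exists>m. iter_comm g h (Suc (Suc k)) = [gen g, ginv h, gen g, gen h] @ m @ [ginv g, ginv h, ginv g, gen h]
     \<and> reduced (iter_comm g h (Suc (Suc k)))
     \<and> okw g h ([ginv h, gen g, gen h] @ m @ [ginv g, ginv h, ginv g])"
proof (induction k)
  case 0
  have e: "iter_comm g h 2 = [gen g, ginv h, gen g, gen h] @ [] @ [ginv g, ginv h, ginv g, gen h]"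
    using gh by (simp add: numeral_2_eq_2 reduce_word_def inv_word_def inv_letter_def gen_def ginv_def)
  show ?case
    apply (rule exI[of _ "[]"])
    using gh e by (simp add: numeral_2_eq_2 reduced_def inv_letter_def gen_def ginv_def okw_def square_words_def sublist_Cons_right)
next
  case (Suc k)
  then obtain m where w: "iter_comm g h (Suc (Suc k)) = [gen g, ginv h, gen g, gen h] @ m @ [ginv g, ginv h, ginv g, gen h]"
    and r: "reduced (iter_comm g h (Suc (Suc k)))"
    and ok: "okw g h ([ginv h, gen g, gen h] @ m @ [ginv g, ginv h, ginv g])" by blast
  define w where "w = iter_comm g h (Suc (Suc k))"
  define t where "t = [ginv h, gen g, gen h] @ m @ [ginv g, ginv h, ginv g, gen h]"
  have wt: "w = gen g # t" using w unfolding w_def t_def by simp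
  have iw: "inv_word w = [ginv h, gen g, gen h, gen g] @ inv_word m @ [ginv h, ginv g, gen h, ginv g]"
    using w unfolding w_def by (simp add: inv_letter_def gen_def ginv_def)
  have rw: "reduced w" using r w_def by simp
  have rt: "reduced t" using rw wt reduced_tl by metis
  have riw: "reduced (inv_word w)" using rw by (rule reduced_inv)
  have r2: "reduced (gen g # inv_word w @ t)"
  proof -
    have h1: "hd (inv_word w) = ginv h" "last (inv_word w) = ginv g" "inv_word w \<noteq> []"
      by (simp_all add: iw)
    have h2: "hd t = ginv h" "t \<noteq> []" by (simp_all add: t_def)
    have "reduced (gen g # inv_word w)"
      using riw h1 gh unfolding reduced_def
      by (simp add: successively_Cons inv_letter_def gen_def ginv_def)
    then show ?thesis using rt h1 h2 gh unfolding reduced_def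
      using successively_append_iff[of _ "gen g # inv_word w" t]
      by (simp add: inv_letter_def gen_def ginv_def)
  qed
  have "iter_comm g h (Suc (Suc (Suc k))) = reduce_word (gen g # inv_word w @ [inv_letter (gen g)] @ gen g # t)"
  proof -
    have "iter_comm g h (Suc (Suc (Suc k))) = reduce_word ([gen g] @ inv_word w @ [ginv g] @ w)"
      unfolding w_def by (rule iter_comm.simps(3))
    moreover have "ginv g = inv_letter (gen g)" by (simp add: inv_letter_def gen_def ginv_def)
    ultimately show ?thesis by (metis wt append_Cons append_Nil)
  qed
  also have "\<dots> = gen g # inv_word w @ t"
    using red_step[OF r2] rw wt by simp
  finally have e: "iter_comm g h (Suc (Suc (Suc k))) = gen g # inv_word w @ t" .
  define m' where "m' = gen g # inv_word m @ [ginv h, ginv g, gen h, ginv g, ginv h, gen g, gen h] @ m"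
  have e2: "iter_comm g h (Suc (Suc (Suc k))) = [gen g, ginv h, gen g, gen h] @ m' @ [ginv g, ginv h, ginv g, gen h]"
    unfolding e iw t_def m'_def by simp
  have okinv: "okw g h ([gen g, gen h, gen g] @ inv_word m @ [ginv h, ginv g, gen h])"
    using okw_inv[OF ok] by (simp add: inv_letter_def gen_def ginv_def)
  have oka: "okw g h ([ginv h] @ [gen g, gen h, gen g] @ (inv_word m @ [ginv h, ginv g, gen h]))"
    by (rule okw_split) (use concrete_ok[OF gh] okinv in simp_all)
  have okb: "okw g h ([ginv h, ginv g, gen h, ginv g] @ [ginv h, gen g, gen h] @ (m @ [ginv g, ginv h, ginv g]))"
    by (rule okw_split) (use concrete_ok[OF gh] ok in simp_all)
  have okc: "okw g h (([ginv h, gen g, gen h, gen g] @ inv_word m) @ [ginv h, ginv g, gen h] @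
      ([ginv g, ginv h, gen g, gen h] @ m @ [ginv g, ginv h, ginv g]))"
    by (rule okw_split) (use oka okb in simp_all)
  show ?case
    apply (rule exI[of _ m'])
    using e2 e r2 okc by (simp add: m'_def)
qed


lemma final_ok:
  assumes gh: "g \<noteq> h" and n: "n \<ge> 1"
  shows "okw g h (iter_comm g h n @ take 3 (iter_comm g h n)) \<and> length (iter_comm g h n) \<ge> 3"
proof (cases n)
  case 0 then show ?thesis using n by simp
next
  case (Suc n1)
  show ?thesis
  proof (cases n1)
    case 0
    then show ?thesis using Suc gh
      by (simp add: okw_def square_words_def gen_def ginv_def sublist_Cons_right)
  next
    case (Suc k)
    obtain m where w: "iter_comm g h n = [gen g, ginv h, gen g, gen h] @ m @ [ginv g, ginv h, ginv g, gen h]"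
      and ok: "okw g h ([ginv h, gen g, gen h] @ m @ [ginv g, ginv h, ginv g])"
      using main_inv[OF gh, of k] \<open>n = Suc n1\<close> Suc by blast
    have ok2: "okw g h (([ginv h, gen g, gen h] @ m) @ [ginv g, ginv h, ginv g] @ [gen h, gen g, ginv h, gen g])"
      by (rule okw_split) (use concrete_ok[OF gh] ok in simp_all)
    have ok3: "okw g h ([gen g] @ [ginv h, gen g, gen h] @ (m @ [ginv g, ginv h, ginv g, gen h, gen g, ginv h, gen g]))"
      by (rule okw_split) (use concrete_ok[OF gh] ok2 in simp_all)
    then show ?thesis by (simp add: w)
  qed
qed

theorem lemma3p11:
  fixes g h :: 'a and n :: nat
  assumes "g \<noteq> h" and "n \<ge> 1"
  shows "\<forall>u \<in> square_words g h. \<not> cyclic_subword u (iter_comm g h n)"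
proof (intro ballI notI)
  fix u assume u: "u \<in> square_words g h" and c: "cyclic_subword u (iter_comm g h n)"
  define w where "w = iter_comm g h n"
  have ok: "okw g h (w @ take 3 w)" and lw: "length w \<ge> 3"
    using final_ok[OF assms] w_def by auto
  from c obtain k where "sublist u (rotate k w) \<or> sublist (inv_word u) (rotate k w)"
    unfolding cyclic_subword_def cyclic_perms_def w_def by blast
  moreover have "u \<in> square_words g h" "inv_word u \<in> square_words g h" using u sq_inv by auto
  ultimately obtain v where v: "v \<in> square_words g h" "sublist v (rotate k w)" by blast
  then have "sublist v (w @ take 3 w)" using rot_sub[OF len_sq[OF v(1)] lw] by blast
  then show False using ok v(1) unfolding okw_def by blast
qed

end
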